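(* Let $\Lambda\in\mathcal H_I$ and let $W$ be a nonempty class of capacities on $(\Omega,\mathcal F)$. Define $\overline w(A)=\sup_{w\in W}w(A)$ and $\underline w(A)=\inf_{w\in W}w(A)$ for $A\in\mathcal F$ (these are capacities). Then for all $X\in\mathcal X$, $$\sup_{w\in W}\Lambda\mathrm{VaR}^{w}(X)=\Lambda\mathrm{VaR}^{\overline w}(X)\quad\text{and}\quad \inf_{w\in W}\Lambda\mathrm{VaR}^{+,w}(X)=\Lambda\mathrm{VaR}^{+,\underline w}(X).$$ In particular, for a nonempty class $\mathcal P$ of probability measures on $(\Omega,\mathcal F)$, $\sup_{\mathbb Q\in\mathcal P}\Lambda\mathrm{VaR}^{\mathbb Q}=\Lambda\mathrm{VaR}^{\overline{\mathbb Q}}$ and $\inf_{\mathbb Q\in\mathcal P}\Lambda\mathrm{VaR}^{+,\mathbb Q}=\Lambda\mathrm{VaR}^{+,\underline{\mathbb Q}}$ with $\overline{\mathbb Q}=\sup_{\mathbb Q\in\mathcal P}\mathbb Q$, $\underline{\mathbb Q}=\inf_{\mathbb Q\in\mathcal P}\mathbb Q$.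
   Context: Let $(\Omega,\mathcal F)$ be a measurable space and $\mathcal X$ a set of real-valued random variables on it containing all bounded ones. A map $w:\mathcal F\to[0,1]$ is a capacity if $w(\emptyset)=0$, $w(\Omega)=1$ and $A\subseteq B$ implies $w(A)\le w(B)$. For $\Lambda:\mathbb R\to[0,1]$ and a capacity $w$: $\Lambda\mathrm{VaR}^w(X)=\inf\{x\in\mathbb R: w(X>x)\le\Lambda(x)\}$, $\Lambda\mathrm{VaR}^{+,w}(X)=\sup\{x\in\mathbb R: w(X>x)\ge\Lambda(x)\}$, with $\inf\emptyset=\infty$, $\sup\emptyset=-\infty$. $\mathcal H_I$ is the set of all (non-strictly) increasing functions $\Lambda:\mathbb R\to(0,1)$. *)

theory Defs
  imports "HOL-Probability.Probability"
begin

text \<open>A capacity on the measurable space underlying M (only its values on sets M matter).\<close>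
definition capacity :: "'a measure \<Rightarrow> ('a set \<Rightarrow> real) \<Rightarrow> bool" where
  "capacity M w \<longleftrightarrow>
     w {} = 0 \<and> w (space M) = 1 \<and>
     (\<forall>A\<in>sets M. 0 \<le> w A \<and> w A \<le> 1) \<and>
     (\<forall>A\<in>sets M. \<forall>B\<in>sets M. A \<subseteq> B \<longrightarrow> w A \<le> w B)"

definition H_I :: "(real \<Rightarrow> real) set" where
  "H_I = {\<Lambda>. mono \<Lambda> \<and> (\<forall>x. 0 < \<Lambda> x \<and> \<Lambda> x < 1)}"

text \<open>Lambda-VaR with respect to a capacity w; values in extended reals
  (Inf of the empty set is +infinity).\<close>
definition LVaR :: "'a measure \<Rightarrow> (real \<Rightarrow> real) \<Rightarrow> ('a set \<Rightarrow> real) \<Rightarrow> ('a \<Rightarrow> real) \<Rightarrow> ereal" where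
  "LVaR M \<Lambda> w X = Inf (ereal ` {x. w {\<omega>\<in>space M. X \<omega> > x} \<le> \<Lambda> x})"

text \<open>Lambda-VaR-plus (Sup of the empty set is -infinity).\<close>
definition LVaR_plus :: "'a measure \<Rightarrow> (real \<Rightarrow> real) \<Rightarrow> ('a set \<Rightarrow> real) \<Rightarrow> ('a \<Rightarrow> real) \<Rightarrow> ereal" where
  "LVaR_plus M \<Lambda> w X = Sup (ereal ` {x. w {\<omega>\<in>space M. X \<omega> > x} \<ge> \<Lambda> x})"

end

theory Submission
  imports Defs
begin

lemma capacityD:
  assumes "capacity M w"
  shows "w {} = 0" "w (space M) = 1" "A \<in> sets M \<Longrightarrow> 0 \<le> w A" "A \<in> sets M \<Longrightarrow> w A \<le> 1"
    "A \<in> sets M \<Longrightarrow> B \<in> sets M \<Longrightarrow> A \<subseteq> B \<Longrightarrow> w A \<le> w B"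
  using assms unfolding capacity_def by auto

lemma sup_part:
  fixes M :: "'a measure" and \<Lambda> :: "real \<Rightarrow> real" and W :: "('a set \<Rightarrow> real) set"
  assumes mono: "mono \<Lambda>" and ne: "W \<noteq> {}" and cap: "\<forall>w\<in>W. capacity M w"
    and X: "X \<in> borel_measurable M"
  shows "(SUP w\<in>W. LVaR M \<Lambda> w X) = LVaR M \<Lambda> (\<lambda>A. SUP w\<in>W. w A) X"
proof -
  define E where "E x = {\<omega>\<in>space M. X \<omega> > x}" for x
  have Es: "E x \<in> sets M" for x unfolding E_def using X by measurable
  define S where "S w = {x. w (E x) \<le> \<Lambda> x}" for w
  have up: "y \<in> S w" if "w \<in> W" "x \<in> S w" "x \<le> y" for w x y
  proof -
    have "E y \<subseteq> E x" using that(3) unfolding E_def by auto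
    hence "w (E y) \<le> w (E x)" using cap that(1) Es capacityD(5) by blast
    also have "\<dots> \<le> \<Lambda> x" using that(2) unfolding S_def by auto
    also have "\<dots> \<le> \<Lambda> y" using mono that(3) by (simp add: monoD)
    finally show ?thesis unfolding S_def by auto
  qed
  have bdd: "bdd_above ((\<lambda>w. w (E x)) ` W)" for x
    using cap Es capacityD(4) by (intro bdd_aboveI2[where M=1]) blast
  define Sb where "Sb = {x. (SUP w\<in>W. w (E x)) \<le> \<Lambda> x}"
  have Sb: "Sb = {x. \<forall>w\<in>W. x \<in> S w}"
    unfolding Sb_def S_def using cSUP_le_iff[OF ne bdd] by auto
  have L: "LVaR M \<Lambda> w X = Inf (ereal ` S w)" for w
    unfolding LVaR_def S_def E_def by simp
  have Lb: "LVaR M \<Lambda> (\<lambda>A. SUP w\<in>W. w A) X = Inf (ereal ` Sb)"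
    unfolding LVaR_def Sb_def E_def by simp
  show ?thesis unfolding Lb L
  proof (rule antisym)
    show "(SUP w\<in>W. Inf (ereal ` S w)) \<le> Inf (ereal ` Sb)"
    proof (rule SUP_least)
      fix w assume "w \<in> W"
      then have "Sb \<subseteq> S w" by (auto simp: Sb)
      then show "Inf (ereal ` S w) \<le> Inf (ereal ` Sb)" by (intro Inf_superset_mono image_mono)
    qed
  next
    show "Inf (ereal ` Sb) \<le> (SUP w\<in>W. Inf (ereal ` S w))"
    proof (rule dense_ge)
      fix z assume z: "(SUP w\<in>W. Inf (ereal ` S w)) < z"
      show "Inf (ereal ` Sb) \<le> z"
      proof (cases z)
        case (real y)
        have "y \<in> Sb" unfolding Sb
        proof (intro CollectI ballI)
          fix w assume w: "w \<in> W"
          have "Inf (ereal ` S w) < ereal y"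
            using SUP_upper[OF w, of "\<lambda>w. Inf (ereal ` S w)"] z real by (meson le_less_trans)
          then obtain s where "s \<in> S w" "ereal s < ereal y" by (auto simp: Inf_less_iff)
          thus "y \<in> S w" using up[OF w] by auto
        qed
        thus ?thesis using real by (simp add: Inf_lower)
      qed (use z in auto)
    qed
  qed
qed

lemma inf_part:
  fixes M :: "'a measure" and \<Lambda> :: "real \<Rightarrow> real" and W :: "('a set \<Rightarrow> real) set"
  assumes mono: "mono \<Lambda>" and ne: "W \<noteq> {}" and cap: "\<forall>w\<in>W. capacity M w"
    and X: "X \<in> borel_measurable M"
  shows "(INF w\<in>W. LVaR_plus M \<Lambda> w X) = LVaR_plus M \<Lambda> (\<lambda>A. INF w\<in>W. w A) X"
proof -
  define E where "E x = {\<omega>\<in>space M. X \<omega> > x}" for x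
  have Es: "E x \<in> sets M" for x unfolding E_def using X by measurable
  define S where "S w = {x. w (E x) \<ge> \<Lambda> x}" for w
  have down: "y \<in> S w" if "w \<in> W" "x \<in> S w" "y \<le> x" for w x y
  proof -
    have "E x \<subseteq> E y" using that(3) unfolding E_def by auto
    hence "w (E x) \<le> w (E y)" using cap that(1) Es capacityD(5) by blast
    moreover have "\<Lambda> x \<le> w (E x)" using that(2) unfolding S_def by auto
    moreover have "\<Lambda> y \<le> \<Lambda> x" using mono that(3) by (simp add: monoD)
    ultimately show ?thesis unfolding S_def by auto
  qed
  have bdd: "bdd_below ((\<lambda>w. w (E x)) ` W)" for x
    using cap Es capacityD(3) by (intro bdd_belowI2[where m=0]) blast
  define Sb where "Sb = {x. (INF w\<in>W. w (E x)) \<ge> \<Lambda> x}"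
  have Sb: "Sb = {x. \<forall>w\<in>W. x \<in> S w}"
    unfolding Sb_def S_def using le_cINF_iff[OF ne bdd] by auto
  have L: "LVaR_plus M \<Lambda> w X = Sup (ereal ` S w)" for w
    unfolding LVaR_plus_def S_def E_def by simp
  have Lb: "LVaR_plus M \<Lambda> (\<lambda>A. INF w\<in>W. w A) X = Sup (ereal ` Sb)"
    unfolding LVaR_plus_def Sb_def E_def by simp
  show ?thesis unfolding Lb L
  proof (rule antisym)
    show "Sup (ereal ` Sb) \<le> (INF w\<in>W. Sup (ereal ` S w))"
    proof (rule INF_greatest)
      fix w assume "w \<in> W"
      then have "Sb \<subseteq> S w" by (auto simp: Sb)
      then show "Sup (ereal ` Sb) \<le> Sup (ereal ` S w)" by (intro Sup_subset_mono image_mono)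
    qed
  next
    show "(INF w\<in>W. Sup (ereal ` S w)) \<le> Sup (ereal ` Sb)"
    proof (rule dense_le)
      fix z assume z: "z < (INF w\<in>W. Sup (ereal ` S w))"
      show "z \<le> Sup (ereal ` Sb)"
      proof (cases z)
        case (real y)
        have "y \<in> Sb" unfolding Sb
        proof (intro CollectI ballI)
          fix w assume w: "w \<in> W"
          have "ereal y < Sup (ereal ` S w)"
            using INF_lower[OF w, of "\<lambda>w. Sup (ereal ` S w)"] z real by (meson less_le_trans)
          then obtain s where "s \<in> S w" "ereal y < ereal s" by (auto simp: less_Sup_iff)
          thus "y \<in> S w" using down[OF w] by auto
        qed
        thus ?thesis using real by (simp add: Sup_upper)
      qed (use z in auto)
    qed
  qed
qed

lemma cap_sup:
  assumes ne: "W \<noteq> {}" and cap: "\<forall>w\<in>W. capacity M w"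
  shows "capacity M (\<lambda>A. SUP w\<in>W. w A) \<and> capacity M (\<lambda>A. INF w\<in>W. w A)"
proof -
  have c: "capacity M w" if "w \<in> W" for w using cap that by blast
  have bdd1: "bdd_above ((\<lambda>w. w A) ` W)" if "A \<in> sets M" for A
    by (rule bdd_aboveI2[where M=1]) (rule capacityD(4)[OF c that])
  have bdd2: "bdd_below ((\<lambda>w. w A) ` W)" if "A \<in> sets M" for A
    by (rule bdd_belowI2[where m=0]) (rule capacityD(3)[OF c that])
  obtain w0 where w0: "w0 \<in> W" using ne by auto
  have 1: "capacity M (\<lambda>A. SUP w\<in>W. w A)"
    unfolding capacity_def
  proof (intro conjI ballI impI)
    have "(SUP w\<in>W. w {}) = (SUP w\<in>W. (0::real))" by (rule SUP_cong) (auto simp: capacityD(1)[OF c])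
    then show "(SUP w\<in>W. w {}) = 0" using ne by simp
    have "(SUP w\<in>W. w (space M)) = (SUP w\<in>W. (1::real))" by (rule SUP_cong) (auto simp: capacityD(2)[OF c])
    then show "(SUP w\<in>W. w (space M)) = 1" using ne by simp
  next
    fix A assume A: "A \<in> sets M"
    show "0 \<le> (SUP w\<in>W. w A)"
      by (rule cSUP_upper2[OF bdd1[OF A] w0]) (rule capacityD(3)[OF c[OF w0] A])
    show "(SUP w\<in>W. w A) \<le> 1"
      by (rule cSUP_least[OF ne]) (rule capacityD(4)[OF c A])
  next
    fix A B assume A: "A \<in> sets M" and B: "B \<in> sets M" and AB: "A \<subseteq> B"
    show "(SUP w\<in>W. w A) \<le> (SUP w\<in>W. w B)"
      by (rule cSUP_mono[OF ne bdd1[OF B]]) (use capacityD(5)[OF c A B AB] in blast)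
  qed
  have 2: "capacity M (\<lambda>A. INF w\<in>W. w A)"
    unfolding capacity_def
  proof (intro conjI ballI impI)
    have "(INF w\<in>W. w {}) = (INF w\<in>W. (0::real))" by (rule INF_cong) (auto simp: capacityD(1)[OF c])
    then show "(INF w\<in>W. w {}) = 0" using ne by simp
    have "(INF w\<in>W. w (space M)) = (INF w\<in>W. (1::real))" by (rule INF_cong) (auto simp: capacityD(2)[OF c])
    then show "(INF w\<in>W. w (space M)) = 1" using ne by simp
  next
    fix A assume A: "A \<in> sets M"
    show "(INF w\<in>W. w A) \<le> 1"
      by (rule cINF_lower2[OF bdd2[OF A] w0]) (rule capacityD(4)[OF c[OF w0] A])
    show "0 \<le> (INF w\<in>W. w A)"
      by (rule cINF_greatest[OF ne]) (rule capacityD(3)[OF c A])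
  next
    fix A B assume A: "A \<in> sets M" and B: "B \<in> sets M" and AB: "A \<subseteq> B"
    show "(INF w\<in>W. w A) \<le> (INF w\<in>W. w B)"
      by (rule cINF_mono[OF ne bdd2[OF A]]) (use capacityD(5)[OF c A B AB] in blast)
  qed
  show ?thesis using 1 2 by blast
qed

theorem mainTheorem2:
  fixes M :: "'a measure" and \<Lambda> :: "real \<Rightarrow> real"
    and W :: "('a set \<Rightarrow> real) set" and \<P> :: "'a measure set"
  assumes "\<Lambda> \<in> H_I"
    and "W \<noteq> {}" and "\<forall>w\<in>W. capacity M w"
    and "\<P> \<noteq> {}"
    and "\<forall>Q\<in>\<P>. prob_space Q \<and> sets Q = sets M"
  shows "capacity M (\<lambda>A. SUP w\<in>W. w A) \<and> capacity M (\<lambda>A. INF w\<in>W. w A)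
    \<and> (\<forall>X\<in>borel_measurable M.
          (SUP w\<in>W. LVaR M \<Lambda> w X) = LVaR M \<Lambda> (\<lambda>A. SUP w\<in>W. w A) X
        \<and> (INF w\<in>W. LVaR_plus M \<Lambda> w X) = LVaR_plus M \<Lambda> (\<lambda>A. INF w\<in>W. w A) X)
    \<and> (\<forall>X\<in>borel_measurable M.
          (SUP Q\<in>\<P>. LVaR M \<Lambda> (measure Q) X) = LVaR M \<Lambda> (\<lambda>A. SUP Q\<in>\<P>. measure Q A) X
        \<and> (INF Q\<in>\<P>. LVaR_plus M \<Lambda> (measure Q) X) = LVaR_plus M \<Lambda> (\<lambda>A. INF Q\<in>\<P>. measure Q A) X)"
proof -
  have mono: "mono \<Lambda>" using assms(1) unfolding H_I_def by auto
  have capP: "\<forall>w\<in>measure ` \<P>. capacity M w"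
  proof
    fix w assume "w \<in> measure ` \<P>"
    then obtain Q where Q: "Q \<in> \<P>" "w = measure Q" by auto
    then have ps: "prob_space Q" and ss: "sets Q = sets M" using assms(5) by auto
    have sp: "space Q = space M" using ss by (rule sets_eq_imp_space_eq)
    interpret prob_space Q by (rule ps)
    have p1: "measure Q (space M) = 1" using prob_space sp by simp
    show "capacity M w" unfolding capacity_def Q(2)
      using ss sp p1 finite_measure_mono by auto
  qed
  have neP: "measure ` \<P> \<noteq> {}" using assms(4) by auto
  show ?thesis
  proof (intro conjI ballI)
    show "capacity M (\<lambda>A. SUP w\<in>W. w A)" "capacity M (\<lambda>A. INF w\<in>W. w A)"
      using cap_sup[OF assms(2,3)] by auto
  next
    fix X :: "'a \<Rightarrow> real" assume X: "X \<in> borel_measurable M"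
    show "(SUP w\<in>W. LVaR M \<Lambda> w X) = LVaR M \<Lambda> (\<lambda>A. SUP w\<in>W. w A) X"
      by (rule sup_part[OF mono assms(2,3) X])
    show "(INF w\<in>W. LVaR_plus M \<Lambda> w X) = LVaR_plus M \<Lambda> (\<lambda>A. INF w\<in>W. w A) X"
      by (rule inf_part[OF mono assms(2,3) X])
  next
    fix X :: "'a \<Rightarrow> real" assume X: "X \<in> borel_measurable M"
    show "(SUP Q\<in>\<P>. LVaR M \<Lambda> (measure Q) X) = LVaR M \<Lambda> (\<lambda>A. SUP Q\<in>\<P>. measure Q A) X"
      using sup_part[OF mono neP capP X] by (simp add: image_comp)
    show "(INF Q\<in>\<P>. LVaR_plus M \<Lambda> (measure Q) X) = LVaR_plus M \<Lambda> (\<lambda>A. INF Q\<in>\<P>. measure Q A) X"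
      using inf_part[OF mono neP capP X] by (simp add: image_comp)
  qed
qed

end
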